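(* Let $G=(V,E)$ be a finite loopless graph with $V\ne\emptyset$ and edge weights $\mathbf{v}=(v_e)_{e\in E}$, and let $q,q_1,q_2$ be indeterminates. Then \[ Z_G(q_1+q_2,\mathbf{v})=\sum_{W\subseteq V}Z_{G[W]}(q_1,\mathbf{v})\,Z_{G[V\setminus W]}(q_2,\mathbf{v}). \] Moreover, for each $i\in V$, \[ \widehat{Z}_G(q_1+q_2,\mathbf{v})=\sum_{W\subseteq V,\ W\ni i}\widehat{Z}_{G[W]}(q_1,\mathbf{v})\,Z_{G[V\setminus W]}(q_2,\mathbf{v}), \] and in particular \[ Z_G(q,\mathbf{v})=\sum_{W\subseteq V,\ W\ni i}q\,C_{G[W]}(\mathbf{v})\,Z_{G[V\setminus W]}(q,\mathbf{v}). \] Also \[ |V|\,Z_G(q_2,\mathbf{v})=\sum_{\emptyset\ne W\subseteq V}\bigl[(q_1+q_2)|W|-q_1|V|\bigr]\widehat{Z}_{G[W]}(q_1,\mathbf{v})\,Z_{G[V\setminus W]}(q_2,\mathbf{v}). \]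
   Context: For a finite graph $H$: $Z_H(q,\mathbf{v})=\sum_{A\subseteq E(H)}q^{k(A)}\prod_{e\in A}v_e$ with $k(A)$ the number of connected components of $(V(H),A)$; $\widehat{Z}_H(q,\mathbf{v})=\sum_{A\subseteq E(H)}q^{k(A)-1}\prod_{e\in A}v_e$ for $V(H)\ne\emptyset$; $C_H(\mathbf{v})=\sum_{A\subseteq E(H),\,k(A)=1}\prod_{e\in A}v_e$. For the empty graph (no vertices), $Z=1$. $G[W]$ denotes the induced subgraph on $W$. *)

theory Defs
  imports Main
begin

text \<open>A finite (multi)graph is given by a vertex set V, an edge set E and an endpoint
map ends :: 'e => 'a set. Loopless: every edge has two distinct endpoints in V.\<close>

definition loopless_graph :: "'a set \<Rightarrow> 'e set \<Rightarrow> ('e \<Rightarrow> 'a set) \<Rightarrow> bool" where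
  "loopless_graph V E ends \<longleftrightarrow> finite V \<and> finite E \<and>
     (\<forall>e\<in>E. \<exists>x y. x \<in> V \<and> y \<in> V \<and> x \<noteq> y \<and> ends e = {x, y})"

definition induced_edges :: "'e set \<Rightarrow> ('e \<Rightarrow> 'a set) \<Rightarrow> 'a set \<Rightarrow> 'e set" where
  "induced_edges E ends W = {e \<in> E. ends e \<subseteq> W}"

definition adj_rel :: "'a set \<Rightarrow> ('e \<Rightarrow> 'a set) \<Rightarrow> 'e set \<Rightarrow> ('a \<times> 'a) set" where
  "adj_rel V ends A = {(x, y). x \<in> V \<and> y \<in> V \<and> (\<exists>e\<in>A. ends e = {x, y})}"

definition ncomp :: "'a set \<Rightarrow> ('e \<Rightarrow> 'a set) \<Rightarrow> 'e set \<Rightarrow> nat" where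
  "ncomp V ends A = card (V // ((adj_rel V ends A)\<^sup>*))"

definition Zpot :: "'a set \<Rightarrow> 'e set \<Rightarrow> ('e \<Rightarrow> 'a set) \<Rightarrow> 'r::comm_ring_1 \<Rightarrow> ('e \<Rightarrow> 'r) \<Rightarrow> 'r" where
  "Zpot V E ends q v = (\<Sum>A\<in>Pow E. q ^ ncomp V ends A * (\<Prod>e\<in>A. v e))"

definition Zhat :: "'a set \<Rightarrow> 'e set \<Rightarrow> ('e \<Rightarrow> 'a set) \<Rightarrow> 'r::comm_ring_1 \<Rightarrow> ('e \<Rightarrow> 'r) \<Rightarrow> 'r" where
  "Zhat V E ends q v = (\<Sum>A\<in>Pow E. q ^ (ncomp V ends A - 1) * (\<Prod>e\<in>A. v e))"

definition Cconn :: "'a set \<Rightarrow> 'e set \<Rightarrow> ('e \<Rightarrow> 'a set) \<Rightarrow> ('e \<Rightarrow> 'r::comm_ring_1) \<Rightarrow> 'r" where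
  "Cconn V E ends v = (\<Sum>A\<in>{A. A \<subseteq> E \<and> ncomp V ends A = 1}. (\<Prod>e\<in>A. v e))"

end

theory Submission
  imports Defs
begin


abbreviation "Rl V ends A \<equiv> (adj_rel V ends A)\<^sup>*"

lemma adj_sym: "(x,y) \<in> adj_rel V ends A \<Longrightarrow> (y,x) \<in> adj_rel V ends A"
  unfolding adj_rel_def by (auto simp: insert_commute)

lemma Rl_sym: "(x,y) \<in> Rl V ends A \<Longrightarrow> (y,x) \<in> Rl V ends A"
proof (induction rule: rtrancl_induct)
  case base then show ?case by simp
next
  case (step y z) then show ?case
    by (meson adj_sym converse_rtrancl_into_rtrancl)
qed

lemma Rl_V: "(x,y) \<in> Rl V ends A \<Longrightarrow> x \<in> V \<Longrightarrow> y \<in> V"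
  by (induction rule: rtrancl_induct) (auto simp: adj_rel_def)

lemma class_sub: "x \<in> V \<Longrightarrow> Rl V ends A `` {x} \<subseteq> V"
  using Rl_V by fast

lemma class_eq: assumes "C \<in> V // Rl V ends A" "x \<in> C" shows "C = Rl V ends A `` {x}"
proof -
  obtain y where y: "y \<in> V" "C = Rl V ends A `` {y}" using assms(1) unfolding quotient_def by blast
  have yx: "(y,x) \<in> Rl V ends A" using y assms(2) by blast
  hence xy: "(x,y) \<in> Rl V ends A" by (rule Rl_sym)
  show ?thesis using y yx xy by (auto intro: rtrancl_trans)
qed

lemma class_mem: assumes "C \<in> V // Rl V ends A" shows "C \<subseteq> V"
proof -
  obtain x where "x \<in> V" "C = Rl V ends A `` {x}" using assms by (rule quotientE)
  then show ?thesis using class_sub by simp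
qed

lemma class_ne: "C \<in> V // Rl V ends A \<Longrightarrow> C \<noteq> {}"
  unfolding quotient_def by blast

lemma class_disj: "C \<in> V // Rl V ends A \<Longrightarrow> D \<in> V // Rl V ends A \<Longrightarrow> x \<in> C \<Longrightarrow> x \<in> D \<Longrightarrow> C = D"
  using class_eq by metis

lemma closed_restrict:
  assumes W: "W \<subseteq> V" and cl: "\<forall>x\<in>W. Rl V ends A `` {x} \<subseteq> W" and x: "x \<in> W"
  shows "Rl W ends A `` {x} = Rl V ends A `` {x}"
proof
  have "adj_rel W ends A \<subseteq> adj_rel V ends A" using W unfolding adj_rel_def by auto
  then show "Rl W ends A `` {x} \<subseteq> Rl V ends A `` {x}" using rtrancl_mono by blast
next
  have "(x,y) \<in> Rl W ends A" if "(x,y) \<in> Rl V ends A" for y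
    using that
  proof (induction rule: rtrancl_induct)
    case base then show ?case by simp
  next
    case (step y z)
    have "y \<in> W" "z \<in> W" using cl x step(1,2) by (auto intro: rtrancl_into_rtrancl)
    then have "(y,z) \<in> adj_rel W ends A" using step(2) unfolding adj_rel_def by auto
    then show ?case using step(3) by (meson rtrancl_into_rtrancl)
  qed
  then show "Rl V ends A `` {x} \<subseteq> Rl W ends A `` {x}" by blast
qed

lemma union_classes_quot:
  assumes S: "S \<subseteq> V // Rl V ends A"
  shows "(\<Union>S) // Rl (\<Union>S) ends A = S"
proof -
  let ?W = "\<Union>S"
  have W: "?W \<subseteq> V" using S class_mem by blast
  have cl: "\<forall>x\<in>?W. Rl V ends A `` {x} \<subseteq> ?W"
  proof
    fix x assume "x \<in> ?W"
    then obtain C where "C \<in> S" "x \<in> C" by blast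
    then show "Rl V ends A `` {x} \<subseteq> ?W" using class_eq[of C V ends A x] S by blast
  qed
  have "?W // Rl ?W ends A = (\<lambda>x. Rl V ends A `` {x}) ` ?W"
    unfolding quotient_def using closed_restrict[OF W cl] by auto
  also have "\<dots> = S"
  proof
    show "(\<lambda>x. Rl V ends A `` {x}) ` ?W \<subseteq> S"
      using class_eq[of _ V ends A] S by blast
  next
    show "S \<subseteq> (\<lambda>x. Rl V ends A `` {x}) ` ?W"
    proof
      fix C assume C: "C \<in> S"
      then obtain y where "y \<in> V" "C = Rl V ends A `` {y}" using S unfolding quotient_def by blast
      then show "C \<in> (\<lambda>x. Rl V ends A `` {x}) ` ?W" using C by blast
    qed
  qed
  finally show ?thesis .
qed

lemma compl_union_classes:
  assumes S: "S \<subseteq> V // Rl V ends A"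
  shows "V - \<Union>S = \<Union>(V // Rl V ends A - S)"
proof
  show "V - \<Union>S \<subseteq> \<Union>(V // Rl V ends A - S)"
  proof
    fix x assume x: "x \<in> V - \<Union>S"
    have "Rl V ends A `` {x} \<in> V // Rl V ends A" using x unfolding quotient_def by blast
    moreover have "x \<in> Rl V ends A `` {x}" by blast
    ultimately show "x \<in> \<Union>(V // Rl V ends A - S)" using x by blast
  qed
next
  show "\<Union>(V // Rl V ends A - S) \<subseteq> V - \<Union>S"
  proof
    fix x assume "x \<in> \<Union>(V // Rl V ends A - S)"
    then obtain C where C: "C \<in> V // Rl V ends A" "C \<notin> S" "x \<in> C" by blast
    have "x \<in> V" using class_mem[OF C(1)] C(3) by blast
    moreover have "x \<notin> \<Union>S"
    proof
      assume "x \<in> \<Union>S"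
      then obtain D where D: "D \<in> S" "x \<in> D" by blast
      then have "C = D" using class_disj[OF C(1), of D x] S C(3) by blast
      then show False using C D by simp
    qed
    ultimately show "x \<in> V - \<Union>S" by blast
  qed
qed




lemma adj_induced: "A \<subseteq> E \<Longrightarrow> adj_rel W ends (A \<inter> induced_edges E ends W) = adj_rel W ends A"
  unfolding adj_rel_def induced_edges_def by auto

lemma ncomp_union:
  assumes "A \<subseteq> E" "S \<subseteq> V // Rl V ends A"
  shows "ncomp (\<Union>S) ends (A \<inter> induced_edges E ends (\<Union>S)) = card S"
  unfolding ncomp_def adj_induced[OF assms(1)] union_classes_quot[OF assms(2)] ..

lemma edge_in_class:
  assumes lg: "loopless_graph V E ends" and A: "A \<subseteq> E" and e: "e \<in> A"
  obtains x y where "x \<in> V" "y \<in> V" "x \<noteq> y" "ends e = {x,y}"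
    "Rl V ends A `` {x} = Rl V ends A `` {y}"
proof -
  obtain x y where xy: "x \<in> V" "y \<in> V" "x \<noteq> y" "ends e = {x,y}"
    using lg A e unfolding loopless_graph_def by blast
  then have "(x,y) \<in> adj_rel V ends A" using e unfolding adj_rel_def by auto
  then have xy': "(x,y) \<in> Rl V ends A" by blast
  then have "(y,x) \<in> Rl V ends A" by (rule Rl_sym)
  note xy' this
  then have "Rl V ends A `` {x} = Rl V ends A `` {y}" by (auto intro: rtrancl_trans)
  then show ?thesis using that xy by blast
qed

lemma edge_split:
  assumes lg: "loopless_graph V E ends" and A: "A \<subseteq> E" and S: "S \<subseteq> V // Rl V ends A"
  shows "(A \<inter> induced_edges E ends (\<Union>S)) \<union> (A \<inter> induced_edges E ends (V - \<Union>S)) = A"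
proof -
  have "e \<in> induced_edges E ends (\<Union>S) \<or> e \<in> induced_edges E ends (V - \<Union>S)" if e: "e \<in> A" for e
  proof -
    obtain x y where xy: "x \<in> V" "y \<in> V" "x \<noteq> y" "ends e = {x,y}"
      "Rl V ends A `` {x} = Rl V ends A `` {y}" using edge_in_class[OF lg A e] by blast
    let ?C = "Rl V ends A `` {x}"
    have CQ: "?C \<in> V // Rl V ends A" using xy unfolding quotient_def by blast
    have xC: "x \<in> ?C" "y \<in> ?C" using xy by auto
    show ?thesis
    proof (cases "?C \<in> S")
      case True
      then have "x \<in> \<Union>S" "y \<in> \<Union>S" using xC by blast+
      then have "ends e \<subseteq> \<Union>S" using xy(4) by simp
      then show ?thesis using e A unfolding induced_edges_def by auto
    next
      case False
      have "x \<notin> \<Union>S" "y \<notin> \<Union>S" using class_disj[OF CQ] S xC False by blast+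
      then have "ends e \<subseteq> V - \<Union>S" using xy by auto
      then show ?thesis using e A unfolding induced_edges_def by auto
    qed
  qed
  then show ?thesis by blast
qed

lemma induced_disj:
  assumes lg: "loopless_graph V E ends"
  shows "induced_edges E ends W \<inter> induced_edges E ends (V - W) = {}"
  using lg unfolding loopless_graph_def induced_edges_def by fastforce

lemma reindex:
  assumes lg: "loopless_graph V E ends"
  shows "(\<Sum>W\<in>Pow V. \<Sum>A1\<in>Pow (induced_edges E ends W). \<Sum>A2\<in>Pow (induced_edges E ends (V - W)).
            F W A1 A2) =
         (\<Sum>A\<in>Pow E. \<Sum>S\<in>Pow (V // Rl V ends A).
            F (\<Union>S) (A \<inter> induced_edges E ends (\<Union>S)) (A \<inter> induced_edges E ends (V - \<Union>S)))"
    (is "?L = ?R")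
proof -
  have fV: "finite V" and fE: "finite E" using lg unfolding loopless_graph_def by auto
  have fIE: "finite (induced_edges E ends W)" for W using fE unfolding induced_edges_def by auto
  have fQ: "finite (V // Rl V ends A)" for A using fV unfolding quotient_def by auto
  define T where "T = (SIGMA W:Pow V. Pow (induced_edges E ends W) \<times> Pow (induced_edges E ends (V - W)))"
  define D where "D = (SIGMA A:Pow E. Pow (V // Rl V ends A))"
  define h where "h = (\<lambda>(A, S). (\<Union>S, A \<inter> induced_edges E ends (\<Union>S), A \<inter> induced_edges E ends (V - \<Union>S)))"
  define g where "g = (\<lambda>(W, A1, A2). (A1 \<union> A2, {C \<in> V // Rl V ends (A1 \<union> A2). C \<subseteq> W}))"
  have L: "?L = (\<Sum>(W, A1, A2)\<in>T. F W A1 A2)"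
    unfolding T_def
    by (subst sum.Sigma[symmetric]) (auto simp: fV fIE sum.cartesian_product)
  have R0: "?R = (\<Sum>(A, S)\<in>D. F (\<Union>S) (A \<inter> induced_edges E ends (\<Union>S)) (A \<inter> induced_edges E ends (V - \<Union>S)))"
    unfolding D_def
    by (subst sum.Sigma[symmetric]) (auto simp: fE fQ)
  have R: "?R = (\<Sum>p\<in>D. (\<lambda>(W, A1, A2). F W A1 A2) (h p))"
    unfolding R0 h_def by (rule sum.cong) auto
  have hT: "h ` D \<subseteq> T"
    proof (rule image_subsetI)
      fix p assume "p \<in> D"
      then obtain A S where p: "p = (A, S)" "A \<subseteq> E" "S \<subseteq> V // Rl V ends A" unfolding D_def by auto
      then have "\<Union>S \<subseteq> V" using class_mem by blast
      then show "h p \<in> T" unfolding T_def h_def p induced_edges_def using p by auto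
    qed
  have gD: "g ` T \<subseteq> D"
    proof (rule image_subsetI)
      fix t assume "t \<in> T"
      then obtain W A1 A2 where t: "t = (W, A1, A2)" "W \<subseteq> V" "A1 \<subseteq> induced_edges E ends W"
        "A2 \<subseteq> induced_edges E ends (V - W)" unfolding T_def by auto
      then show "g t \<in> D" unfolding D_def g_def induced_edges_def by auto
    qed
  have left: "\<forall>p\<in>D. g (h p) = p"
  proof
    fix p assume "p \<in> D"
    then obtain A S where p: "p = (A, S)" "A \<subseteq> E" "S \<subseteq> V // Rl V ends A" unfolding D_def by auto
    have sp: "(A \<inter> induced_edges E ends (\<Union>S)) \<union> (A \<inter> induced_edges E ends (V - \<Union>S)) = A"
      by (rule edge_split[OF lg p(2,3)])
    have "{C \<in> V // Rl V ends A. C \<subseteq> \<Union>S} = S"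
    proof
      show "{C \<in> V // Rl V ends A. C \<subseteq> \<Union>S} \<subseteq> S"
      proof
        fix C assume C: "C \<in> {C \<in> V // Rl V ends A. C \<subseteq> \<Union>S}"
        then obtain x where "x \<in> C" using class_ne by blast
        then obtain D where "D \<in> S" "x \<in> D" using C by blast
        then show "C \<in> S" using class_disj[of C V ends A D x] C p(3) \<open>x \<in> C\<close> by blast
      qed
    qed (use p(3) in blast)
    then show "g (h p) = p" unfolding g_def h_def p using sp by simp
  qed
  have right: "\<forall>t\<in>T. h (g t) = t"
  proof
    fix t assume "t \<in> T"
    then obtain W A1 A2 where t: "t = (W, A1, A2)" "W \<subseteq> V" "A1 \<subseteq> induced_edges E ends W"
      "A2 \<subseteq> induced_edges E ends (V - W)" unfolding T_def by auto
    let ?A = "A1 \<union> A2"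
    have cl: "Rl V ends ?A `` {x} \<subseteq> W" if x: "x \<in> W" for x
    proof -
      have "z \<in> W" if "(x,z) \<in> Rl V ends ?A" for z
        using that
      proof (induction rule: rtrancl_induct)
        case base then show ?case using x .
      next
        case (step y z)
        then obtain e where e: "e \<in> ?A" "ends e = {y,z}" unfolding adj_rel_def by auto
        show ?case
        proof (cases "e \<in> A1")
          case True then show ?thesis using t(3) e unfolding induced_edges_def by auto
        next
          case False
          then have "e \<in> A2" using e by auto
          then have "ends e \<subseteq> V - W" using t(4) unfolding induced_edges_def by auto
          then show ?thesis using e step(3) by auto
        qed
      qed
      then show ?thesis by blast
    qed
    have U: "\<Union>{C \<in> V // Rl V ends ?A. C \<subseteq> W} = W"
    proof
      show "W \<subseteq> \<Union>{C \<in> V // Rl V ends ?A. C \<subseteq> W}"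
      proof
        fix x assume x: "x \<in> W"
        have "Rl V ends ?A `` {x} \<in> V // Rl V ends ?A" using x t(2) unfolding quotient_def by blast
        then show "x \<in> \<Union>{C \<in> V // Rl V ends ?A. C \<subseteq> W}" using cl[OF x] by blast
      qed
    qed blast
    have ne: "ends e \<noteq> {}" if "e \<in> E" for e using lg that unfolding loopless_graph_def by auto
    have e1: "?A \<inter> induced_edges E ends W = A1"
      using t(3,4) ne unfolding induced_edges_def by blast
    have e2: "?A \<inter> induced_edges E ends (V - W) = A2"
      using t(3,4) ne unfolding induced_edges_def by blast
    show "h (g t) = t" unfolding g_def h_def t using U e1 e2 by simp
  qed
  have bij: "bij_betw h D T" by (rule bij_betw_byWitness[OF left right hT gD])
  have "(\<Sum>p\<in>D. (\<lambda>(W, A1, A2). F W A1 A2) (h p)) = (\<Sum>t\<in>T. (\<lambda>(W, A1, A2). F W A1 A2) t)"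
    by (rule sum.reindex_bij_betw[OF bij])
  then show ?thesis unfolding L R by (rule sym)
qed




lemma binom_set:
  fixes a b :: "'r::comm_ring_1"
  assumes "finite Q"
  shows "(\<Sum>S\<in>Pow Q. a ^ card S * b ^ card (Q - S)) = (a + b) ^ card Q"
proof -
  have "(\<Prod>x\<in>Q. a + b) = (\<Sum>X\<in>Pow Q. (\<Prod>x\<in>X. a) * (\<Prod>x\<in>Q-X. b))"
    by (rule prod_add[OF assms])
  then show ?thesis by (simp only: prod_constant)
qed

lemma binom_root:
  fixes a b :: "'r::comm_ring_1"
  assumes Q: "finite Q" and c: "c \<in> Q"
  shows "(\<Sum>S\<in>Pow Q. if c \<in> S then a ^ (card S - 1) * b ^ card (Q - S) else 0) = (a + b) ^ (card Q - 1)"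
proof -
  let ?f = "\<lambda>x. if x = c then 1 else a" and ?g = "\<lambda>x. if x = c then 0 else b"
  have "(\<Prod>x\<in>Q. ?f x + ?g x) = (\<Sum>X\<in>Pow Q. (\<Prod>x\<in>X. ?f x) * (\<Prod>x\<in>Q-X. ?g x))"
    by (rule prod_add[OF Q])
  also have "\<dots> = (\<Sum>S\<in>Pow Q. if c \<in> S then a ^ (card S - 1) * b ^ card (Q - S) else 0)"
  proof (rule sum.cong[OF refl])
    fix S assume S: "S \<in> Pow Q"
    have fS: "finite S" using S Q finite_subset by blast
    show "(\<Prod>x\<in>S. ?f x) * (\<Prod>x\<in>Q-S. ?g x) = (if c \<in> S then a ^ (card S - 1) * b ^ card (Q - S) else 0)"
    proof (cases "c \<in> S")
      case True
      have "(\<Prod>x\<in>S. ?f x) = ?f c * (\<Prod>x\<in>S - {c}. ?f x)" using prod.remove[OF fS True] .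
      also have "\<dots> = a ^ (card S - 1)" using fS True by simp
      finally have 1: "(\<Prod>x\<in>S. ?f x) = a ^ (card S - 1)" .
      have "(\<Prod>x\<in>Q-S. ?g x) = (\<Prod>x\<in>Q-S. b)" using True by (intro prod.cong) auto
      then have 2: "(\<Prod>x\<in>Q-S. ?g x) = b ^ card (Q - S)" by simp
      show ?thesis using True 1 2 by simp
    next
      case False
      have "(\<Prod>x\<in>Q-S. ?g x) = 0" using False c Q by (intro prod_zero) auto
      then show ?thesis using False by simp
    qed
  qed
  finally have eq: "(\<Prod>x\<in>Q. ?f x + ?g x) = (\<Sum>S\<in>Pow Q. if c \<in> S then a ^ (card S - 1) * b ^ card (Q - S) else 0)" .
  have "(\<Prod>x\<in>Q. ?f x + ?g x) = (?f c + ?g c) * (\<Prod>x\<in>Q - {c}. ?f x + ?g x)"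
    using prod.remove[OF Q c] .
  also have "\<dots> = (a + b) ^ (card Q - 1)" using Q c by simp
  finally show ?thesis using eq by simp
qed

lemma term_facts:
  assumes lg: "loopless_graph V E ends" and A: "A \<subseteq> E" and S: "S \<subseteq> V // Rl V ends A"
  shows "ncomp (\<Union>S) ends (A \<inter> induced_edges E ends (\<Union>S)) = card S"
    and "ncomp (V - \<Union>S) ends (A \<inter> induced_edges E ends (V - \<Union>S)) = card (V // Rl V ends A - S)"
    and "prod v (A \<inter> induced_edges E ends (\<Union>S)) * prod v (A \<inter> induced_edges E ends (V - \<Union>S)) = prod v A"
proof -
  show "ncomp (\<Union>S) ends (A \<inter> induced_edges E ends (\<Union>S)) = card S" by (rule ncomp_union[OF A S])
  show "ncomp (V - \<Union>S) ends (A \<inter> induced_edges E ends (V - \<Union>S)) = card (V // Rl V ends A - S)"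
    unfolding compl_union_classes[OF S] by (rule ncomp_union[OF A]) blast
  have fA: "finite A" using lg A finite_subset unfolding loopless_graph_def by blast
  have "prod v A = prod v ((A \<inter> induced_edges E ends (\<Union>S)) \<union> (A \<inter> induced_edges E ends (V - \<Union>S)))"
    using edge_split[OF lg A S] by simp
  also have "\<dots> = prod v (A \<inter> induced_edges E ends (\<Union>S)) * prod v (A \<inter> induced_edges E ends (V - \<Union>S))"
    by (rule prod.union_disjoint) (use fA induced_disj[OF lg, of "\<Union>S"] in auto)
  finally show "prod v (A \<inter> induced_edges E ends (\<Union>S)) * prod v (A \<inter> induced_edges E ends (V - \<Union>S)) = prod v A" by simp
qed

lemma fin_quot: "finite V \<Longrightarrow> finite (V // Rl V ends A)"
  unfolding quotient_def by auto

lemma stmt1: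
  fixes v :: "'e \<Rightarrow> 'r::comm_ring_1"
  assumes lg: "loopless_graph V E ends"
  shows "Zpot V E ends (q1 + q2) v =
           (\<Sum>W\<in>Pow V. Zpot W (induced_edges E ends W) ends q1 v *
                        Zpot (V - W) (induced_edges E ends (V - W)) ends q2 v)"
proof -
  have fV: "finite V" and fE: "finite E" using lg unfolding loopless_graph_def by auto
  have fIE: "finite (induced_edges E ends W)" for W using fE unfolding induced_edges_def by auto
  have "(\<Sum>W\<in>Pow V. Zpot W (induced_edges E ends W) ends q1 v *
                        Zpot (V - W) (induced_edges E ends (V - W)) ends q2 v)
     = (\<Sum>W\<in>Pow V. \<Sum>A1\<in>Pow (induced_edges E ends W). \<Sum>A2\<in>Pow (induced_edges E ends (V - W)).
          (q1 ^ ncomp W ends A1 * prod v A1) * (q2 ^ ncomp (V - W) ends A2 * prod v A2))"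
    unfolding Zpot_def by (simp add: sum_product)
  also have "\<dots> = (\<Sum>A\<in>Pow E. \<Sum>S\<in>Pow (V // Rl V ends A).
          (q1 ^ ncomp (\<Union>S) ends (A \<inter> induced_edges E ends (\<Union>S)) * prod v (A \<inter> induced_edges E ends (\<Union>S))) *
          (q2 ^ ncomp (V - \<Union>S) ends (A \<inter> induced_edges E ends (V - \<Union>S)) * prod v (A \<inter> induced_edges E ends (V - \<Union>S))))"
    by (rule reindex[OF lg])
  also have "\<dots> = (\<Sum>A\<in>Pow E. (\<Sum>S\<in>Pow (V // Rl V ends A). q1 ^ card S * q2 ^ card (V // Rl V ends A - S)) * prod v A)"
  proof (rule sum.cong[OF refl])
    fix A assume A: "A \<in> Pow E"
    show "(\<Sum>S\<in>Pow (V // Rl V ends A).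
          (q1 ^ ncomp (\<Union>S) ends (A \<inter> induced_edges E ends (\<Union>S)) * prod v (A \<inter> induced_edges E ends (\<Union>S))) *
          (q2 ^ ncomp (V - \<Union>S) ends (A \<inter> induced_edges E ends (V - \<Union>S)) * prod v (A \<inter> induced_edges E ends (V - \<Union>S))))
        = (\<Sum>S\<in>Pow (V // Rl V ends A). q1 ^ card S * q2 ^ card (V // Rl V ends A - S)) * prod v A"
      unfolding sum_distrib_right
    proof (rule sum.cong[OF refl])
      fix S assume S: "S \<in> Pow (V // Rl V ends A)"
      have A': "A \<subseteq> E" and S': "S \<subseteq> V // Rl V ends A" using A S by auto
      note tf = term_facts[OF lg A' S']
      have "(q1 ^ ncomp (\<Union>S) ends (A \<inter> induced_edges E ends (\<Union>S)) * prod v (A \<inter> induced_edges E ends (\<Union>S))) *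
          (q2 ^ ncomp (V - \<Union>S) ends (A \<inter> induced_edges E ends (V - \<Union>S)) * prod v (A \<inter> induced_edges E ends (V - \<Union>S)))
        = q1 ^ card S * q2 ^ card (V // Rl V ends A - S) *
          (prod v (A \<inter> induced_edges E ends (\<Union>S)) * prod v (A \<inter> induced_edges E ends (V - \<Union>S)))"
        using tf A S by (simp add: algebra_simps)
      also have "\<dots> = q1 ^ card S * q2 ^ card (V // Rl V ends A - S) * prod v A" by (simp only: tf(3))
      finally show "(q1 ^ ncomp (\<Union>S) ends (A \<inter> induced_edges E ends (\<Union>S)) * prod v (A \<inter> induced_edges E ends (\<Union>S))) *
          (q2 ^ ncomp (V - \<Union>S) ends (A \<inter> induced_edges E ends (V - \<Union>S)) * prod v (A \<inter> induced_edges E ends (V - \<Union>S)))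
        = q1 ^ card S * q2 ^ card (V // Rl V ends A - S) * prod v A" .
    qed
  qed
  also have "\<dots> = Zpot V E ends (q1 + q2) v"
    unfolding Zpot_def ncomp_def by (simp add: binom_set[OF fin_quot[OF fV]])
  finally show ?thesis by simp
qed




lemma root_iff:
  assumes S: "S \<subseteq> V // Rl V ends A" and i: "i \<in> V"
  shows "i \<in> \<Union>S \<longleftrightarrow> Rl V ends A `` {i} \<in> S"
proof
  assume "i \<in> \<Union>S"
  then obtain D where "D \<in> S" "i \<in> D" by blast
  then show "Rl V ends A `` {i} \<in> S" using class_eq[of D V ends A i] S by auto
next
  assume "Rl V ends A `` {i} \<in> S"
  then show "i \<in> \<Union>S" by blast
qed

lemma stmt2:
  fixes v :: "'e \<Rightarrow> 'r::comm_ring_1"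
  assumes lg: "loopless_graph V E ends" and i: "i \<in> V"
  shows "Zhat V E ends (q1 + q2) v =
           (\<Sum>W\<in>{W. W \<subseteq> V \<and> i \<in> W}. Zhat W (induced_edges E ends W) ends q1 v *
                        Zpot (V - W) (induced_edges E ends (V - W)) ends q2 v)"
proof -
  have fV: "finite V" and fE: "finite E" using lg unfolding loopless_graph_def by auto
  have set: "{W. W \<subseteq> V \<and> i \<in> W} = {W \<in> Pow V. i \<in> W}" by auto
  have "(\<Sum>W\<in>{W. W \<subseteq> V \<and> i \<in> W}. Zhat W (induced_edges E ends W) ends q1 v *
                        Zpot (V - W) (induced_edges E ends (V - W)) ends q2 v)
     = (\<Sum>W\<in>Pow V. if i \<in> W then Zhat W (induced_edges E ends W) ends q1 v *
                        Zpot (V - W) (induced_edges E ends (V - W)) ends q2 v else 0)"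
    unfolding set by (rule sum.inter_filter) (simp add: fV)
  also have "\<dots> = (\<Sum>W\<in>Pow V. \<Sum>A1\<in>Pow (induced_edges E ends W). \<Sum>A2\<in>Pow (induced_edges E ends (V - W)).
          (if i \<in> W then (q1 ^ (ncomp W ends A1 - 1) * prod v A1) * (q2 ^ ncomp (V - W) ends A2 * prod v A2) else 0))"
    by (rule sum.cong[OF refl]) (simp add: Zhat_def Zpot_def sum_product)
  also have "\<dots> = (\<Sum>A\<in>Pow E. \<Sum>S\<in>Pow (V // Rl V ends A).
          (if i \<in> \<Union>S then
          (q1 ^ (ncomp (\<Union>S) ends (A \<inter> induced_edges E ends (\<Union>S)) - 1) * prod v (A \<inter> induced_edges E ends (\<Union>S))) *
          (q2 ^ ncomp (V - \<Union>S) ends (A \<inter> induced_edges E ends (V - \<Union>S)) * prod v (A \<inter> induced_edges E ends (V - \<Union>S))) else 0))"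
    by (rule reindex[OF lg])
  also have "\<dots> = (\<Sum>A\<in>Pow E. (\<Sum>S\<in>Pow (V // Rl V ends A).
        if Rl V ends A `` {i} \<in> S then q1 ^ (card S - 1) * q2 ^ card (V // Rl V ends A - S) else 0) * prod v A)"
  proof (rule sum.cong[OF refl])
    fix A assume A: "A \<in> Pow E"
    show "(\<Sum>S\<in>Pow (V // Rl V ends A).
          (if i \<in> \<Union>S then
          (q1 ^ (ncomp (\<Union>S) ends (A \<inter> induced_edges E ends (\<Union>S)) - 1) * prod v (A \<inter> induced_edges E ends (\<Union>S))) *
          (q2 ^ ncomp (V - \<Union>S) ends (A \<inter> induced_edges E ends (V - \<Union>S)) * prod v (A \<inter> induced_edges E ends (V - \<Union>S))) else 0))
        = (\<Sum>S\<in>Pow (V // Rl V ends A).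
        if Rl V ends A `` {i} \<in> S then q1 ^ (card S - 1) * q2 ^ card (V // Rl V ends A - S) else 0) * prod v A"
      unfolding sum_distrib_right
    proof (rule sum.cong[OF refl])
      fix S assume S: "S \<in> Pow (V // Rl V ends A)"
      have A': "A \<subseteq> E" and S': "S \<subseteq> V // Rl V ends A" using A S by auto
      note tf = term_facts[OF lg A' S']
      note ri = root_iff[OF S' i]
      show "(if i \<in> \<Union>S then
          (q1 ^ (ncomp (\<Union>S) ends (A \<inter> induced_edges E ends (\<Union>S)) - 1) * prod v (A \<inter> induced_edges E ends (\<Union>S))) *
          (q2 ^ ncomp (V - \<Union>S) ends (A \<inter> induced_edges E ends (V - \<Union>S)) * prod v (A \<inter> induced_edges E ends (V - \<Union>S))) else 0)
        = (if Rl V ends A `` {i} \<in> S then q1 ^ (card S - 1) * q2 ^ card (V // Rl V ends A - S) else 0) * prod v A"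
      proof (cases "i \<in> \<Union>S")
        case True
        have "(q1 ^ (ncomp (\<Union>S) ends (A \<inter> induced_edges E ends (\<Union>S)) - 1) * prod v (A \<inter> induced_edges E ends (\<Union>S))) *
          (q2 ^ ncomp (V - \<Union>S) ends (A \<inter> induced_edges E ends (V - \<Union>S)) * prod v (A \<inter> induced_edges E ends (V - \<Union>S)))
          = q1 ^ (card S - 1) * q2 ^ card (V // Rl V ends A - S) *
          (prod v (A \<inter> induced_edges E ends (\<Union>S)) * prod v (A \<inter> induced_edges E ends (V - \<Union>S)))"
          using tf(1,2) by (simp add: algebra_simps)
        also have "\<dots> = q1 ^ (card S - 1) * q2 ^ card (V // Rl V ends A - S) * prod v A" by (simp only: tf(3))
        finally show ?thesis using True ri by simp
      next
        case False then show ?thesis using ri by simp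
      qed
    qed
  qed
  also have "\<dots> = Zhat V E ends (q1 + q2) v"
  proof -
    have c: "Rl V ends A `` {i} \<in> V // Rl V ends A" for A using i unfolding quotient_def by blast
    show ?thesis unfolding Zhat_def ncomp_def by (simp add: binom_root[OF fin_quot[OF fV] c])
  qed
  finally show ?thesis by simp
qed




lemma ncomp_pos: assumes "finite W" "W \<noteq> {}" shows "ncomp W ends A \<ge> 1"
proof -
  have "finite (W // Rl W ends A)" using assms(1) by (rule fin_quot)
  moreover have "W // Rl W ends A \<noteq> {}" using assms(2) unfolding quotient_def by blast
  ultimately show ?thesis unfolding ncomp_def by (simp add: Suc_le_eq card_gt_0_iff)
qed

lemma Zpot_Zhat: assumes "finite W" "W \<noteq> {}"
  shows "Zpot W E' ends q v = q * Zhat W E' ends q v"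
  unfolding Zpot_def Zhat_def sum_distrib_left
proof (rule sum.cong[OF refl])
  fix A
  have "ncomp W ends A = Suc (ncomp W ends A - 1)" using ncomp_pos[OF assms, of ends A] by simp
  then have "q ^ ncomp W ends A = q * q ^ (ncomp W ends A - 1)" by (metis power_Suc)
  then show "q ^ ncomp W ends A * prod v A = q * (q ^ (ncomp W ends A - 1) * prod v A)" by simp
qed

lemma Zhat0: assumes "finite W" "W \<noteq> {}" "finite E'"
  shows "Zhat W E' ends 0 v = Cconn W E' ends v"
proof -
  have "Cconn W E' ends v = (\<Sum>A\<in>{A \<in> Pow E'. ncomp W ends A = 1}. prod v A)"
    unfolding Cconn_def by (rule sum.cong) auto
  also have "\<dots> = (\<Sum>A\<in>Pow E'. if ncomp W ends A = 1 then prod v A else 0)"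
    by (rule sum.inter_filter) (simp add: assms(3))
  also have "\<dots> = Zhat W E' ends 0 v"
    unfolding Zhat_def
  proof (rule sum.cong[OF refl])
    fix A
    have "ncomp W ends A \<ge> 1" using ncomp_pos[OF assms(1,2)] .
    then show "(if ncomp W ends A = 1 then prod v A else 0) = 0 ^ (ncomp W ends A - 1) * prod v A"
      by (auto simp: power_0_left)
  qed
  finally show ?thesis by simp
qed

lemma Zpot_empty: assumes lg: "loopless_graph V E ends"
  shows "Zpot {} (induced_edges E ends {}) ends q v = 1"
proof -
  have "induced_edges E ends {} = {}" using lg unfolding loopless_graph_def induced_edges_def by auto
  moreover have "ncomp {} ends {} = 0" unfolding ncomp_def by simp
  ultimately show ?thesis unfolding Zpot_def by simp
qed

lemma IE_V: assumes lg: "loopless_graph V E ends" shows "induced_edges E ends V = E"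
  using lg unfolding loopless_graph_def induced_edges_def by auto

theorem proposition3p7:
  fixes V :: "'a set" and E :: "'e set" and ends :: "'e \<Rightarrow> 'a set"
    and v :: "'e \<Rightarrow> 'r::comm_ring_1" and q q1 q2 :: 'r
  assumes "loopless_graph V E ends" and "V \<noteq> {}"
  shows "(Zpot V E ends (q1 + q2) v =
           (\<Sum>W\<in>Pow V. Zpot W (induced_edges E ends W) ends q1 v *
                        Zpot (V - W) (induced_edges E ends (V - W)) ends q2 v)) \<and>
      (\<forall>i\<in>V. Zhat V E ends (q1 + q2) v =
           (\<Sum>W\<in>{W. W \<subseteq> V \<and> i \<in> W}. Zhat W (induced_edges E ends W) ends q1 v *
                        Zpot (V - W) (induced_edges E ends (V - W)) ends q2 v)) \<and>
      (\<forall>i\<in>V. Zpot V E ends q v =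
           (\<Sum>W\<in>{W. W \<subseteq> V \<and> i \<in> W}. q * Cconn W (induced_edges E ends W) ends v *
                        Zpot (V - W) (induced_edges E ends (V - W)) ends q v)) \<and>
      (of_nat (card V) * Zpot V E ends q2 v =
           (\<Sum>W\<in>{W. W \<subseteq> V \<and> W \<noteq> {}}.
              ((q1 + q2) * of_nat (card W) - q1 * of_nat (card V)) *
              Zhat W (induced_edges E ends W) ends q1 v *
              Zpot (V - W) (induced_edges E ends (V - W)) ends q2 v))"
proof -
  note lg = assms(1)
  have fV: "finite V" and fE: "finite E" using lg unfolding loopless_graph_def by auto
  have fIE: "finite (induced_edges E ends W)" for W using fE unfolding induced_edges_def by auto
  have S1: "Zpot V E ends (q1 + q2) v =
           (\<Sum>W\<in>Pow V. Zpot W (induced_edges E ends W) ends q1 v *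
                        Zpot (V - W) (induced_edges E ends (V - W)) ends q2 v)"
    by (rule stmt1[OF lg])
  have S2: "\<forall>i\<in>V. Zhat V E ends (q1 + q2) v =
           (\<Sum>W\<in>{W. W \<subseteq> V \<and> i \<in> W}. Zhat W (induced_edges E ends W) ends q1 v *
                        Zpot (V - W) (induced_edges E ends (V - W)) ends q2 v)"
    using stmt2[OF lg] by blast
  have S3: "\<forall>i\<in>V. Zpot V E ends q v =
           (\<Sum>W\<in>{W. W \<subseteq> V \<and> i \<in> W}. q * Cconn W (induced_edges E ends W) ends v *
                        Zpot (V - W) (induced_edges E ends (V - W)) ends q v)"
  proof
    fix i assume i: "i \<in> V"
    have "Zpot V E ends q v = q * Zhat V E ends (0 + q) v" using Zpot_Zhat[OF fV assms(2)] by simp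
    also have "\<dots> = q * (\<Sum>W\<in>{W. W \<subseteq> V \<and> i \<in> W}. Zhat W (induced_edges E ends W) ends 0 v *
                        Zpot (V - W) (induced_edges E ends (V - W)) ends q v)"
      using stmt2[OF lg i, of 0 q v] by simp
    also have "\<dots> = (\<Sum>W\<in>{W. W \<subseteq> V \<and> i \<in> W}. q * Cconn W (induced_edges E ends W) ends v *
                        Zpot (V - W) (induced_edges E ends (V - W)) ends q v)"
      unfolding sum_distrib_left
    proof (rule sum.cong[OF refl])
      fix W assume W: "W \<in> {W. W \<subseteq> V \<and> i \<in> W}"
      then have fW: "finite W" and neW: "W \<noteq> {}" using fV finite_subset by auto
      show "q * (Zhat W (induced_edges E ends W) ends 0 v * Zpot (V - W) (induced_edges E ends (V - W)) ends q v)
          = q * Cconn W (induced_edges E ends W) ends v * Zpot (V - W) (induced_edges E ends (V - W)) ends q v"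
        by (simp add: Zhat0[OF fW neW fIE] mult.assoc)
    qed
    finally show "Zpot V E ends q v =
           (\<Sum>W\<in>{W. W \<subseteq> V \<and> i \<in> W}. q * Cconn W (induced_edges E ends W) ends v *
                        Zpot (V - W) (induced_edges E ends (V - W)) ends q v)" .
  qed
  define T where "T W = Zhat W (induced_edges E ends W) ends q1 v *
                        Zpot (V - W) (induced_edges E ends (V - W)) ends q2 v" for W
  define N where "N = {W. W \<subseteq> V \<and> W \<noteq> {}}"
  define H where "H = Zhat V E ends (q1 + q2) v"
  have PN: "Pow V = insert {} N" and eN: "{} \<notin> N" unfolding N_def by auto
  have fN: "finite N" unfolding N_def using fV by simp
  have a: "of_nat (card V) * H = (\<Sum>W\<in>N. of_nat (card W) * T W)"
  proof -
    have "of_nat (card V) * H = (\<Sum>i\<in>V. H)" by simp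
    also have "\<dots> = (\<Sum>i\<in>V. \<Sum>W\<in>Pow V. if i \<in> W then T W else 0)"
    proof (rule sum.cong[OF refl])
      fix i assume i: "i \<in> V"
      have set: "{W. W \<subseteq> V \<and> i \<in> W} = {W \<in> Pow V. i \<in> W}" by auto
      have "H = (\<Sum>W\<in>{W. W \<subseteq> V \<and> i \<in> W}. T W)" using S2 i unfolding H_def T_def by simp
      also have "\<dots> = (\<Sum>W\<in>{W \<in> Pow V. i \<in> W}. T W)" unfolding set ..
      also have "\<dots> = (\<Sum>W\<in>Pow V. if i \<in> W then T W else 0)" by (rule sum.inter_filter) (simp add: fV)
      finally show "H = (\<Sum>W\<in>Pow V. if i \<in> W then T W else 0)" .
    qed
    also have "\<dots> = (\<Sum>W\<in>Pow V. \<Sum>i\<in>V. if i \<in> W then T W else 0)" by (rule sum.swap)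
    also have "\<dots> = (\<Sum>W\<in>Pow V. of_nat (card W) * T W)"
    proof (rule sum.cong[OF refl])
      fix W assume W: "W \<in> Pow V"
      have "(\<Sum>i\<in>V. if i \<in> W then T W else 0) = (\<Sum>i\<in>{i \<in> V. i \<in> W}. T W)"
        by (rule sum.inter_filter[symmetric]) (simp add: fV)
      also have "{i \<in> V. i \<in> W} = W" using W by auto
      finally show "(\<Sum>i\<in>V. if i \<in> W then T W else 0) = of_nat (card W) * T W" by simp
    qed
    also have "\<dots> = (\<Sum>W\<in>N. of_nat (card W) * T W)" unfolding PN using fN eN by simp
    finally show ?thesis .
  qed
  have b: "Zpot V E ends (q1 + q2) v = Zpot V E ends q2 v + (\<Sum>W\<in>N. q1 * T W)"
  proof -
    have "Zpot V E ends (q1 + q2) v = Zpot {} (induced_edges E ends {}) ends q1 v *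
                        Zpot (V - {}) (induced_edges E ends (V - {})) ends q2 v +
           (\<Sum>W\<in>N. Zpot W (induced_edges E ends W) ends q1 v *
                        Zpot (V - W) (induced_edges E ends (V - W)) ends q2 v)"
      unfolding S1 PN using fN eN by simp
    also have "Zpot {} (induced_edges E ends {}) ends q1 v *
                        Zpot (V - {}) (induced_edges E ends (V - {})) ends q2 v = Zpot V E ends q2 v"
      by (simp add: Zpot_empty[OF lg] IE_V[OF lg])
    also have "(\<Sum>W\<in>N. Zpot W (induced_edges E ends W) ends q1 v *
                        Zpot (V - W) (induced_edges E ends (V - W)) ends q2 v) = (\<Sum>W\<in>N. q1 * T W)"
    proof (rule sum.cong[OF refl])
      fix W assume "W \<in> N"
      then have fW: "finite W" and neW: "W \<noteq> {}" unfolding N_def using fV finite_subset by auto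
      have "Zpot W (induced_edges E ends W) ends q1 v = q1 * Zhat W (induced_edges E ends W) ends q1 v"
        by (rule Zpot_Zhat[OF fW neW])
      then show "Zpot W (induced_edges E ends W) ends q1 v *
                        Zpot (V - W) (induced_edges E ends (V - W)) ends q2 v = q1 * T W"
        unfolding T_def by (simp add: mult.assoc)
    qed
    finally show ?thesis .
  qed
  have c: "Zpot V E ends (q1 + q2) v = (q1 + q2) * H" unfolding H_def by (rule Zpot_Zhat[OF fV assms(2)])
  have S4: "of_nat (card V) * Zpot V E ends q2 v =
           (\<Sum>W\<in>N. ((q1 + q2) * of_nat (card W) - q1 * of_nat (card V)) * T W)"
  proof -
    have "(\<Sum>W\<in>N. ((q1 + q2) * of_nat (card W) - q1 * of_nat (card V)) * T W)
        = (q1 + q2) * (\<Sum>W\<in>N. of_nat (card W) * T W) - of_nat (card V) * (\<Sum>W\<in>N. q1 * T W)"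
      by (simp add: sum_distrib_left left_diff_distrib sum_subtractf mult.assoc mult.left_commute)
    also have "\<dots> = (q1 + q2) * (of_nat (card V) * H) - of_nat (card V) * (Zpot V E ends (q1 + q2) v - Zpot V E ends q2 v)"
      using a b by simp
    also have "\<dots> = of_nat (card V) * Zpot V E ends q2 v" using c by (simp add: algebra_simps)
    finally show ?thesis by simp
  qed
  show ?thesis
    using S1 S2 S3 S4 unfolding T_def N_def by (simp add: mult.assoc)
qed


end
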